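(* Let $y$ be a string over an alphabet $\Sigma$, let $a,b\in\Sigma$ and $x\in\Sigma^*$. Then $axb\in\mathrm{MAW}(y)$ if and only if all of the following hold: $x,ax\in\mathrm{Substr}(y)$; $x=\overleftarrow{x}$; $\mathrm{DAWG}(y)$ has the edge $([x]_R,b,[xb]_R)$; the suffix link of the node $[ax]_R$ leads to $[x]_R$; and the node $[ax]_R$ has no out-going edge labeled $b$.
   Context: $\mathrm{Substr}(y)$ is the set of substrings of $y$ (including the empty string). A string $w$ is a minimal absent word (MAW) of $y$ if $w\notin\mathrm{Substr}(y)$ but every proper substring of $w$ is in $\mathrm{Substr}(y)$; $\mathrm{MAW}(y)$ is the set of these. $\mathrm{EndPos}(x)=\{i\mid |x|\le i\le|y|,\ y[i-|x|+1..i]=x\}$; $u\equiv_R v$ iff $\mathrm{EndPos}(u)=\mathrm{EndPos}(v)$; $[x]_R$ is the class of $x$, and for $x\in\mathrm{Substr}(y)$, $\overleftarrow{x}$ is the longest element of $[x]_R$. $\mathrm{DAWG}(y)$ is the edge-labeled DAG with node set $\{[x]_R\mid x\in\mathrm{Substr}(y)\}$ and edge set $\{([x]_R,b,[xb]_R)\mid x,xb\in\mathrm{Substr}(y), b\in\Sigma\}$. Its suffix links are $\{([ax]_R,a,[x]_R)\mid x,ax\in\mathrm{Substr}(y), a\in\Sigma, [ax]_R\neq[x]_R\}$; each non-source node has exactly one out-going suffix link. *)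

theory Defs
  imports Main
begin

definition Substr :: "'a list \<Rightarrow> 'a list set" where
  "Substr y = {x. \<exists>u v. y = u @ x @ v}"

definition MAW :: "'a list \<Rightarrow> 'a list set" where
  "MAW y = {w. w \<notin> Substr y \<and> (\<forall>z \<in> Substr w. z \<noteq> w \<longrightarrow> z \<in> Substr y)}"

text \<open>End positions, 1-indexed: i with |x| <= i <= |y| and y[i-|x|+1..i] = x.\<close>
definition EndPos :: "'a list \<Rightarrow> 'a list \<Rightarrow> nat set" where
  "EndPos y x = {i. length x \<le> i \<and> i \<le> length y \<and> drop (i - length x) (take i y) = x}"

definition Rclass :: "'a list \<Rightarrow> 'a list \<Rightarrow> 'a list set" where
  "Rclass y x = {u. EndPos y u = EndPos y x}"

text \<open>The longest element of [x]_R (meaningful for x in Substr y).\<close>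
definition longest_rep :: "'a list \<Rightarrow> 'a list \<Rightarrow> 'a list" where
  "longest_rep y x = (THE u. u \<in> Rclass y x \<and> (\<forall>v \<in> Rclass y x. length v \<le> length u))"

definition dawg_nodes :: "'a list \<Rightarrow> 'a list set set" where
  "dawg_nodes y = {Rclass y x | x. x \<in> Substr y}"

definition dawg_edges :: "'a list \<Rightarrow> ('a list set \<times> 'a \<times> 'a list set) set" where
  "dawg_edges y = {(Rclass y x, b, Rclass y (x @ [b])) | x b.
      x \<in> Substr y \<and> x @ [b] \<in> Substr y}"

definition suffix_links :: "'a list \<Rightarrow> ('a list set \<times> 'a \<times> 'a list set) set" where
  "suffix_links y = {(Rclass y (a # x), a, Rclass y x) | x a.
      x \<in> Substr y \<and> a # x \<in> Substr y \<and> Rclass y (a # x) \<noteq> Rclass y x}"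

end

theory Submission
  imports Defs
begin

lemma EndPos_iff:
  "i \<in> EndPos y x \<longleftrightarrow> (\<exists>p q. y = p @ x @ q \<and> i = length p + length x)"
proof
  assume h: "i \<in> EndPos y x"
  hence i1: "length x \<le> i" "i \<le> length y" and d: "drop (i - length x) (take i y) = x"
    by (auto simp: EndPos_def)
  have "take i y = take (i - length x) (take i y) @ x" using d
    by (metis append_take_drop_id)
  hence "take i y = take (i - length x) y @ x" using i1 by (simp add: min_def)
  hence "y = take (i - length x) y @ x @ drop i y" by (metis append_assoc append_take_drop_id)
  moreover have "i = length (take (i - length x) y) + length x" using i1 by simp
  ultimately show "\<exists>p q. y = p @ x @ q \<and> i = length p + length x" by blast
next
  assume "\<exists>p q. y = p @ x @ q \<and> i = length p + length x"
  then obtain p q where "y = p @ x @ q" "i = length p + length x" by blast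
  thus "i \<in> EndPos y x" by (simp add: EndPos_def)
qed

lemma Substr_iff: "z \<in> Substr y \<longleftrightarrow> EndPos y z \<noteq> {}"
proof
  assume "z \<in> Substr y"
  then obtain u v where "y = u @ z @ v" by (auto simp: Substr_def)
  hence "length u + length z \<in> EndPos y z" unfolding EndPos_iff by blast
  thus "EndPos y z \<noteq> {}" by blast
next
  assume "EndPos y z \<noteq> {}"
  then obtain i where "i \<in> EndPos y z" by blast
  then obtain p q where "y = p @ z @ q" unfolding EndPos_iff by blast
  thus "z \<in> Substr y" by (auto simp: Substr_def)
qed

lemma ext_right:
  assumes "EndPos y u = EndPos y v" "u @ [b] \<in> Substr y"
  shows "v @ [b] \<in> Substr y"
proof -
  obtain p q where y: "y = p @ u @ b # q" using assms(2) by (auto simp: Substr_def)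
  have "length p + length u \<in> EndPos y u" using y by (auto simp: EndPos_iff)
  hence "length p + length u \<in> EndPos y v" using assms(1) by simp
  then obtain p' q' where y': "y = p' @ v @ q'" "length p + length u = length p' + length v"
    by (auto simp: EndPos_iff)
  have "q' = drop (length p' + length v) y" using y' by simp
  also have "\<dots> = drop (length p + length u) y" using y' by simp
  also have "\<dots> = b # q" using y by simp
  finally show ?thesis using y' by (auto simp: Substr_def)
qed

lemma suffix_sub: "EndPos y (w @ s) \<subseteq> EndPos y s"
proof
  fix i assume "i \<in> EndPos y (w @ s)"
  then obtain p q where "y = p @ (w @ s) @ q" "i = length p + length (w @ s)"
    unfolding EndPos_iff by blast
  hence "y = (p @ w) @ s @ q" "i = length (p @ w) + length s" by simp_all
  thus "i \<in> EndPos y s" unfolding EndPos_iff by blast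
qed

lemma same_letter:
  assumes "i \<in> EndPos y (a # x)" "i \<in> EndPos y (c # x)"
  shows "a = c"
proof -
  obtain p q where 1: "y = p @ (a # x) @ q" "i = length p + length (a#x)"
    using assms(1) unfolding EndPos_iff by blast
  obtain p' q' where 2: "y = p' @ (c # x) @ q'" "i = length p' + length (c#x)"
    using assms(2) unfolding EndPos_iff by blast
  have l: "length p = length p'" using 1 2 by simp
  have "y ! length p = a" using 1 by (simp add: nth_append)
  moreover have "y ! length p' = c" using 2 by (simp add: nth_append)
  ultimately show ?thesis using l by simp
qed

lemma Substr_trans: "z \<in> Substr w \<Longrightarrow> w \<in> Substr y \<Longrightarrow> z \<in> Substr y"
proof -
  assume "z \<in> Substr w" "w \<in> Substr y"
  then obtain u v u' v' where "w = u @ z @ v" "y = u' @ w @ v'" by (auto simp: Substr_def)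
  hence "y = (u' @ u) @ z @ (v @ v')" by simp
  thus "z \<in> Substr y" unfolding Substr_def by blast
qed

lemma proper_sub:
  assumes "z \<in> Substr (a # x @ [b])" "z \<noteq> a # x @ [b]"
  shows "z \<in> Substr (a # x) \<or> z \<in> Substr (x @ [b])"
proof -
  obtain u v where e: "a # x @ [b] = u @ z @ v" using assms(1) unfolding Substr_def mem_Collect_eq by blast
  show ?thesis
  proof (cases u)
    case Nil
    have "v \<noteq> []"
    proof
      assume "v = []" thus False using e assms(2) Nil by simp
    qed
    then obtain v' c where "v = v' @ [c]" by (cases v rule: rev_cases) auto
    hence "a # x = [] @ z @ v'" using e Nil by simp
    hence "z \<in> Substr (a # x)" unfolding Substr_def by (intro CollectI exI)
    thus ?thesis by simp
  next
    case (Cons c u')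
    hence "x @ [b] = u' @ z @ v" using e by simp
    hence "z \<in> Substr (x @ [b])" unfolding Substr_def by (intro CollectI exI)
    thus ?thesis by simp
  qed
qed

lemma Rclass_eq: "Rclass y u = Rclass y v \<longleftrightarrow> EndPos y u = EndPos y v"
proof
  assume "Rclass y u = Rclass y v"
  moreover have "u \<in> Rclass y u" by (simp add: Rclass_def)
  ultimately show "EndPos y u = EndPos y v" by (simp add: Rclass_def)
qed (simp add: Rclass_def)

lemma not_same:
  assumes "a # x \<in> Substr y" "x @ [b] \<in> Substr y" "a # x @ [b] \<notin> Substr y"
  shows "EndPos y (a # x) \<noteq> EndPos y x"
  using ext_right[of y x "a # x" b] assms by auto

lemma longest:
  assumes "a # x \<in> Substr y" "x @ [b] \<in> Substr y" "a # x @ [b] \<notin> Substr y"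
  shows "longest_rep y x = x"
proof -
  have ne: "EndPos y x \<noteq> {}"
    using assms(1) suffix_sub[of y "[a]" x] by (auto simp: Substr_iff)
  have bound: "length v \<le> length x" if v: "v \<in> Rclass y x" for v
  proof (rule ccontr)
    assume "\<not> length v \<le> length x"
    hence lt: "length x < length v" by simp
    have ev: "EndPos y v = EndPos y x" using v by (simp add: Rclass_def)
    obtain i where i: "i \<in> EndPos y x" using ne by blast
    hence iv: "i \<in> EndPos y v" using ev by simp
    have dx: "drop (i - length x) (take i y) = x" "length x \<le> i" "i \<le> length y"
      using i by (auto simp: EndPos_def)
    have dv: "drop (i - length v) (take i y) = v" "length v \<le> i"
      using iv by (auto simp: EndPos_def)
    have "drop (length v - length x) v = drop (length v - length x) (drop (i - length v) (take i y))"
      using dv by simp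
    also have "\<dots> = drop (i - length x) (take i y)" using lt dv(2) by simp
    finally have "drop (length v - length x) v = x" using dx by simp
    hence v1: "v = take (length v - length x) v @ x" by (metis append_take_drop_id)
    have v2: "take (length v - length x) v \<noteq> []" using lt by (cases v) auto
    obtain w where vw: "v = w @ x" "w \<noteq> []" using v1 v2 by blast
    then obtain w' c where wc: "w = w' @ [c]" by (cases w rule: rev_cases) auto
    have "EndPos y v \<subseteq> EndPos y (c # x)"
      using suffix_sub[of y w' "c # x"] vw wc by simp
    moreover have "EndPos y (c # x) \<subseteq> EndPos y x"
      using suffix_sub[of y "[c]" x] by simp
    ultimately have ecx: "EndPos y (c # x) = EndPos y x" using ev by blast
    obtain j where j: "j \<in> EndPos y (a # x)" using assms(1) by (auto simp: Substr_iff)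
    hence "j \<in> EndPos y x" using suffix_sub[of y "[a]" x] by auto
    hence "j \<in> EndPos y (c # x)" using ecx by simp
    hence "a = c" using same_letter j by metis
    hence "EndPos y (a # x) = EndPos y x" using ecx by simp
    thus False using not_same[OF assms] by simp
  qed
  have self: "x \<in> Rclass y x" by (simp add: Rclass_def)
  show ?thesis unfolding longest_rep_def
  proof (rule the_equality)
    show "x \<in> Rclass y x \<and> (\<forall>v\<in>Rclass y x. length v \<le> length x)" using self bound by blast
  next
    fix u assume u: "u \<in> Rclass y x \<and> (\<forall>v\<in>Rclass y x. length v \<le> length u)"
    hence len: "length u = length x" using bound self by (meson le_antisym)
    obtain i where i: "i \<in> EndPos y x" using ne by blast
    hence "i \<in> EndPos y u" using u by (simp add: Rclass_def)
    thus "u = x" using i len by (simp add: EndPos_def)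
  qed
qed

lemma edge_intro: "x \<in> Substr y \<Longrightarrow> x @ [b] \<in> Substr y \<Longrightarrow> (Rclass y x, b, Rclass y (x @ [b])) \<in> dawg_edges y"
  unfolding dawg_edges_def mem_Collect_eq by (intro exI[of _ x] exI[of _ b] conjI refl)
lemma edge_elim: "(S, b, T) \<in> dawg_edges y \<Longrightarrow> \<exists>x'. S = Rclass y x' \<and> T = Rclass y (x' @ [b]) \<and> x' \<in> Substr y \<and> x' @ [b] \<in> Substr y"
  unfolding dawg_edges_def mem_Collect_eq by auto
lemma suffix_intro: "x \<in> Substr y \<Longrightarrow> a # x \<in> Substr y \<Longrightarrow> Rclass y (a # x) \<noteq> Rclass y x \<Longrightarrow> (Rclass y (a # x), a, Rclass y x) \<in> suffix_links y"
  unfolding suffix_links_def mem_Collect_eq by (intro exI[of _ x] exI[of _ a] conjI refl)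

theorem lemma9:
  fixes y x :: "'a list" and a b :: 'a
  shows "a # x @ [b] \<in> MAW y \<longleftrightarrow>
    (x \<in> Substr y \<and> a # x \<in> Substr y \<and>
     x = longest_rep y x \<and>
     (Rclass y x, b, Rclass y (x @ [b])) \<in> dawg_edges y \<and>
     (\<exists>c. (Rclass y (a # x), c, Rclass y x) \<in> suffix_links y) \<and>
     \<not> (\<exists>T. (Rclass y (a # x), b, T) \<in> dawg_edges y))"
proof
  assume m: "a # x @ [b] \<in> MAW y"
  have m2: "a # x @ [b] \<notin> Substr y \<and> (\<forall>z \<in> Substr (a # x @ [b]). z \<noteq> a # x @ [b] \<longrightarrow> z \<in> Substr y)"
    using m unfolding MAW_def mem_Collect_eq .
  have nw: "a # x @ [b] \<notin> Substr y" using m2 by (rule conjunct1)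
  have pr: "z \<in> Substr y" if "z \<in> Substr (a # x @ [b])" "z \<noteq> a # x @ [b]" for z
    using m2 that by simp
  have "a # x @ [b] = [] @ (a # x) @ [b]" by simp
  hence "a # x \<in> Substr (a # x @ [b])" unfolding Substr_def by (intro CollectI exI)
  hence ax: "a # x \<in> Substr y" by (rule pr) simp
  have "a # x @ [b] = [a] @ (x @ [b]) @ []" by simp
  hence "x @ [b] \<in> Substr (a # x @ [b])" unfolding Substr_def by (intro CollectI exI)
  hence xb: "x @ [b] \<in> Substr y" by (rule pr) simp
  have "x @ [b] = [] @ x @ [b]" by simp
  hence "x \<in> Substr (x @ [b])" unfolding Substr_def by (intro CollectI exI)
  hence xs: "x \<in> Substr y" using xb by (rule Substr_trans)
  have l: "x = longest_rep y x" using longest[OF ax xb nw] by simp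
  have e: "(Rclass y x, b, Rclass y (x @ [b])) \<in> dawg_edges y"
    using xs xb by (rule edge_intro)
  have "EndPos y (a # x) \<noteq> EndPos y x" using not_same[OF ax xb nw] .
  hence "Rclass y (a # x) \<noteq> Rclass y x" unfolding Rclass_eq .
  hence s: "(Rclass y (a # x), a, Rclass y x) \<in> suffix_links y"
    by (rule suffix_intro[OF xs ax])
  have n: "\<not> (\<exists>T. (Rclass y (a # x), b, T) \<in> dawg_edges y)"
  proof
    assume "\<exists>T. (Rclass y (a # x), b, T) \<in> dawg_edges y"
    then obtain T where "(Rclass y (a # x), b, T) \<in> dawg_edges y" by (elim exE)
    then obtain x' where x': "Rclass y (a # x) = Rclass y x'" "x' @ [b] \<in> Substr y"
      using edge_elim by metis
    have "EndPos y x' = EndPos y (a # x)" using x'(1) unfolding Rclass_eq by simp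
    hence "(a # x) @ [b] \<in> Substr y" using x'(2) by (rule ext_right)
    thus False using nw by simp
  qed
  show "x \<in> Substr y \<and> a # x \<in> Substr y \<and> x = longest_rep y x \<and>
     (Rclass y x, b, Rclass y (x @ [b])) \<in> dawg_edges y \<and>
     (\<exists>c. (Rclass y (a # x), c, Rclass y x) \<in> suffix_links y) \<and>
     \<not> (\<exists>T. (Rclass y (a # x), b, T) \<in> dawg_edges y)"
    using xs ax l e s n by (intro conjI exI) 
next
  assume h: "x \<in> Substr y \<and> a # x \<in> Substr y \<and> x = longest_rep y x \<and>
     (Rclass y x, b, Rclass y (x @ [b])) \<in> dawg_edges y \<and>
     (\<exists>c. (Rclass y (a # x), c, Rclass y x) \<in> suffix_links y) \<and>
     \<not> (\<exists>T. (Rclass y (a # x), b, T) \<in> dawg_edges y)"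
  have ax: "a # x \<in> Substr y" using h by simp
  have ed: "(Rclass y x, b, Rclass y (x @ [b])) \<in> dawg_edges y" using h by simp
  have noe: "\<not> (\<exists>T. (Rclass y (a # x), b, T) \<in> dawg_edges y)" using h by simp
  obtain x' where x': "Rclass y (x @ [b]) = Rclass y (x' @ [b])" "x' @ [b] \<in> Substr y"
    using edge_elim[OF ed] by metis
  have "EndPos y (x @ [b]) = EndPos y (x' @ [b])" using x'(1) unfolding Rclass_eq .
  moreover have "EndPos y (x' @ [b]) \<noteq> {}" using x'(2) unfolding Substr_iff .
  ultimately have "EndPos y (x @ [b]) \<noteq> {}" by simp
  hence xb: "x @ [b] \<in> Substr y" unfolding Substr_iff .
  have nw: "a # x @ [b] \<notin> Substr y"
  proof
    assume "a # x @ [b] \<in> Substr y"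
    hence "(a # x) @ [b] \<in> Substr y" by simp
    hence "(Rclass y (a # x), b, Rclass y ((a # x) @ [b])) \<in> dawg_edges y"
      using ax edge_intro by metis
    thus False using noe by blast
  qed
  show "a # x @ [b] \<in> MAW y" unfolding MAW_def
  proof (intro CollectI conjI ballI impI)
    show "a # x @ [b] \<notin> Substr y" by (rule nw)
  next
    fix z assume "z \<in> Substr (a # x @ [b])" "z \<noteq> a # x @ [b]"
    hence "z \<in> Substr (a # x) \<or> z \<in> Substr (x @ [b])" by (rule proper_sub)
    thus "z \<in> Substr y"
    proof
      assume "z \<in> Substr (a # x)" thus ?thesis using ax by (rule Substr_trans)
    next
      assume "z \<in> Substr (x @ [b])" thus ?thesis using xb by (rule Substr_trans)
    qed
  qed
qed

end
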